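(* Consider a run of the algorithm described in the context, and assume the event $\mathcal E$ occurs. Let $j$ be an iteration of the run and let $\mathcal V_{(j)}$ be the value of $\mathcal V$ at the start of iteration $j$. For a family $f$ define \[S_j^{\neg}(f):=\max\{\mathcal S(E): E\in\mathcal E_{d,k},\ E^{(j)}\neq\emptyset,\ f\notin U(E^{(j)})\}.\] Suppose that for some $f\in U(\mathcal G_j^* )\cap\mathcal F_{\mathrm{act}}(\mathcal V_{(j)})$ we have $S_j^\neg(f)<\mathcal S^*-2\theta_j$, where $\mathcal G_j^*=\{G\in\mathcal G_j:\mathcal S(G)=\mathcal S^*\}$. Then some family is accepted by the algorithm at iteration $j$.
   Context: Setting. $\mathbf{X}=(X_1,\dots,X_d)$ is a random vector; $k$ a fixed positive integer; natural logarithms. A family is $f=\langle X_i,\Pi\rangle$ with $\Pi\subseteq\{X_1,\dots,X_d\}\setminus\{X_i\}$, $|\Pi|\le k$; $\mathcal F_{d,k}$ the set of families; $H(f)=H(X_i\mid\Pi)$. $\mathcal G_{d,k}$ = DAGs over the variables with in-degree $\le k$, identified with their family sets; $\mathcal S(F)=-\sum_{f\in F}H(f)$; $\mathcal S^*=\max_{G\in\mathcal G_{d,k}}\mathcal S(G)$. $\mathcal E_{d,k}$ is the set of Markov equivalence classes (ECs) on $\mathcal G_{d,k}$; graphs in an EC $E$ share a score $\mathcal S(E)$. Each sample is an independent copy of $\mathbf X$ of which only a chosen set of $k+1$ coordinates is revealed. $\hat H$ is an estimator of $H(f)$ from the samples where all variables of $f$ were observed, and $N(\epsilon,\delta)$ is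 such that for any fixed $f$, at least $N(\epsilon,\delta)$ such samples give $|\hat H(f)-H(f)|\le\epsilon$ with probability $\ge1-\delta$. Notation: $\mathcal F_{\mathrm{act}}(\mathcal V)$ = families whose child is not in $\mathcal V\subseteq[d]$; $\mathcal G_j=\{G\in\mathcal G_{d,k}:\mathcal A_j\subseteq G\}$; $E^{(j)}=E\cap\mathcal G_j$; $U(\mathcal A)=\bigcup_{G\in\mathcal A}G$; $\hat H_t(f)$ = estimate from all samples up to round $t$; $\hat{\mathcal S}_t(G)=-\sum_{f\in G}\hat H_t(f)$; $\hat{\mathcal S}_t(\mathcal A)=\max_{G\in\mathcal A}\hat{\mathcal S}_t(G)$. Algorithm (inputs $d,k,\delta\in(0,1),\epsilon,\epsilon_1>0$). Initialize $\mathcal A_1=\emptyset,\mathcal V=\emptyset,N_0=0,t=1,j=1,T=\lceil\log_2(2d\epsilon_1/\epsilon)\rceil$. While $\epsilon_t>\epsilon/(d-|\mathcal V|)$ (a "round" $t$): $N_t=N(\epsilon_t/2,\delta/(T|\mathcal F_{\mathrm{act}}(\mathcal V)|))$; observe each $(k+1)$-subset of $[d]$ not contained in $\mathcal V$ in $N_t-N_{t-1}$ new samples; repeat the following "iteration" until $\mathcal A_j=\mathcal A_{j-1}$: $\theta_j=(d-|\mathcal V|)\epsilon_t$; $\hat G_j\in\arg\max_{G\in\mathcal G_j}\hat{\mathcal S}_t(G)$, $\hat E_j$ its EC; $L_j=\{E\in\mathcal E_{d,k}:E^{(j)}\neq\emptyset,\hat{\mathcal S}_t(\hat E_j^{(j)})-\hat{\mathcal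 S}_t(E^{(j)})\le\theta_j\}$; if some $f\in U(\hat E_j^{(j)})\cap\mathcal F_{\mathrm{act}}(\mathcal V)$ satisfies $f\in U(E^{(j)})$ for all $E\in L_j$, accept one such $f=\langle X_v,\Pi\rangle$: $\mathcal V\leftarrow\mathcal V\cup\{v\}$, $\mathcal A_{j+1}=\mathcal A_j\cup\{f\}$; else $\mathcal A_{j+1}=\mathcal A_j$; $j\leftarrow j+1$. After the iterations, if $|\mathcal V|=d$ return $\mathcal A_j$; else $t\leftarrow t+1$, $\epsilon_t=\epsilon_{t-1}/2$. After the while loop: $\epsilon_{\mathrm{last}}=\epsilon/(d-|\mathcal V|)$, $N_T=N(\epsilon_{\mathrm{last}}/2,\delta/(T|\mathcal F_{\mathrm{act}}(\mathcal V)|))$, observe remaining subsets in $N_T-N_{T-1}$ more samples, return a maximizer of $\hat{\mathcal S}_T$ over $\mathcal G_j$. Event: with $\mathcal V_t$ the value of $\mathcal V$ at the start of round $t$, $\mathcal E:=\{\forall t\in[T],\forall f\in\mathcal F_{\mathrm{act}}(\mathcal V_t): |\hat H_t(f)-H(f)|\le\epsilon_t/2\}$. *)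

theory Defs
  imports "HOL-Probability.Probability_Mass_Function"
begin

text \<open>Variables are indexed by 0..<d. A family is a pair (child, parent set).\<close>
type_synonym family = "nat \<times> nat set"

definition ent :: "'a pmf \<Rightarrow> real" where
  "ent q = - (\<Sum>x\<in>set_pmf q. pmf q x * ln (pmf q x))"

definition marg :: "(nat \<Rightarrow> 'v) pmf \<Rightarrow> nat set \<Rightarrow> (nat \<Rightarrow> 'v) pmf" where
  "marg P A = map_pmf (\<lambda>\<omega> i. if i \<in> A then \<omega> i else undefined) P"

text \<open>H(f) = H(X_i | X_Pi) = H(X_i, X_Pi) - H(X_Pi).\<close>
definition Hfam :: "(nat \<Rightarrow> 'v) pmf \<Rightarrow> family \<Rightarrow> real" where
  "Hfam P f = ent (marg P (insert (fst f) (snd f))) - ent (marg P (snd f))"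

definition families :: "nat \<Rightarrow> nat \<Rightarrow> family set" where
  "families d k = {(i, Pa). i < d \<and> Pa \<subseteq> {..<d} - {i} \<and> card Pa \<le> k}"

definition edges :: "family set \<Rightarrow> (nat \<times> nat) set" where
  "edges G = {(u, v). \<exists>Pa. (v, Pa) \<in> G \<and> u \<in> Pa}"

text \<open>DAGs on the d variables with in-degree at most k, identified with their family sets.\<close>
definition dags :: "nat \<Rightarrow> nat \<Rightarrow> family set set" where
  "dags d k = {G. G \<subseteq> families d k \<and> (\<forall>i<d. \<exists>!Pa. (i, Pa) \<in> G) \<and> acyclic (edges G)}"

definition score :: "(family \<Rightarrow> real) \<Rightarrow> family set \<Rightarrow> real" where
  "score H G = - (\<Sum>f\<in>G. H f)"

definition Sstar :: "nat \<Rightarrow> nat \<Rightarrow> (family \<Rightarrow> real) \<Rightarrow> real" where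
  "Sstar d k H = Max (score H ` dags d k)"

definition adj :: "family set \<Rightarrow> nat \<Rightarrow> nat \<Rightarrow> bool" where
  "adj G u v \<longleftrightarrow> (u, v) \<in> edges G \<or> (v, u) \<in> edges G"

definition trail :: "family set \<Rightarrow> nat list \<Rightarrow> bool" where
  "trail G p \<longleftrightarrow> 2 \<le> length p \<and> distinct p \<and>
     (\<forall>m. m + 1 < length p \<longrightarrow> adj G (p ! m) (p ! (m + 1)))"

definition collider :: "family set \<Rightarrow> nat list \<Rightarrow> nat \<Rightarrow> bool" where
  "collider G p m \<longleftrightarrow> (p ! (m - 1), p ! m) \<in> edges G \<and> (p ! (m + 1), p ! m) \<in> edges G"

definition blocked :: "family set \<Rightarrow> nat set \<Rightarrow> nat list \<Rightarrow> bool" where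
  "blocked G Z p \<longleftrightarrow> (\<exists>m. 0 < m \<and> m + 1 < length p \<and>
     (if collider G p m then (\<forall>w. (p ! m, w) \<in> (edges G)\<^sup>* \<longrightarrow> w \<notin> Z)
      else p ! m \<in> Z))"

definition dsep :: "family set \<Rightarrow> nat set \<Rightarrow> nat set \<Rightarrow> nat set \<Rightarrow> bool" where
  "dsep G A B Z \<longleftrightarrow> (\<forall>p. trail G p \<and> hd p \<in> A \<and> last p \<in> B \<longrightarrow> blocked G Z p)"

definition markov_equiv :: "nat \<Rightarrow> family set \<Rightarrow> family set \<Rightarrow> bool" where
  "markov_equiv d G G' \<longleftrightarrow> (\<forall>A B Z. A \<subseteq> {..<d} \<and> B \<subseteq> {..<d} \<and> Z \<subseteq> {..<d} \<and>
      A \<inter> B = {} \<and> A \<inter> Z = {} \<and> B \<inter> Z = {} \<longrightarrow> (dsep G A B Z \<longleftrightarrow> dsep G' A B Z))"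

definition meq_rel :: "nat \<Rightarrow> nat \<Rightarrow> (family set \<times> family set) set" where
  "meq_rel d k = {(G, G'). G \<in> dags d k \<and> G' \<in> dags d k \<and> markov_equiv d G G'}"

definition ECs :: "nat \<Rightarrow> nat \<Rightarrow> family set set set" where
  "ECs d k = dags d k // meq_rel d k"

definition ec_of :: "nat \<Rightarrow> nat \<Rightarrow> family set \<Rightarrow> family set set" where
  "ec_of d k G = meq_rel d k `` {G}"

text \<open>Score of an equivalence class (all members share it in the paper's setting; we take the max).\<close>
definition score_EC :: "(family \<Rightarrow> real) \<Rightarrow> family set set \<Rightarrow> real" where
  "score_EC H E = Max (score H ` E)"

definition Fact :: "nat \<Rightarrow> nat \<Rightarrow> nat set \<Rightarrow> family set" where
  "Fact d k V = {f \<in> families d k. fst f \<notin> V}"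

definition Gj :: "nat \<Rightarrow> nat \<Rightarrow> family set \<Rightarrow> family set set" where
  "Gj d k A = {G \<in> dags d k. A \<subseteq> G}"

definition Ufam :: "family set set \<Rightarrow> family set" where
  "Ufam \<A> = \<Union>\<A>"

definition Shat_set :: "(family \<Rightarrow> real) \<Rightarrow> family set set \<Rightarrow> real" where
  "Shat_set Hh \<A> = Max (score Hh ` \<A>)"

definition epsr :: "real \<Rightarrow> nat \<Rightarrow> real" where
  "epsr eps1 t = eps1 / 2 ^ (t - 1)"

definition theta :: "nat \<Rightarrow> nat set \<Rightarrow> real \<Rightarrow> real" where
  "theta d V et = real (d - card V) * et"

definition accept_cands :: "nat \<Rightarrow> nat \<Rightarrow> (family \<Rightarrow> real) \<Rightarrow> real \<Rightarrow> nat set \<Rightarrow> family set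
    \<Rightarrow> family set \<Rightarrow> family set" where
  "accept_cands d k Hh et V A Ghat =
    (let GJ = Gj d k A; Ehat = ec_of d k Ghat;
         L = {E \<in> ECs d k. E \<inter> GJ \<noteq> {} \<and>
                Shat_set Hh (Ehat \<inter> GJ) - Shat_set Hh (E \<inter> GJ) \<le> theta d V et}
     in {f \<in> Ufam (Ehat \<inter> GJ) \<inter> Fact d k V. \<forall>E\<in>L. f \<in> Ufam (E \<inter> GJ)})"

definition iter_step :: "nat \<Rightarrow> nat \<Rightarrow> (family \<Rightarrow> real) \<Rightarrow> real \<Rightarrow> nat set \<Rightarrow> family set
    \<Rightarrow> family set \<Rightarrow> nat set \<Rightarrow> family set \<Rightarrow> bool" where
  "iter_step d k Hh et V A Ghat V' A' \<longleftrightarrow>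
     Ghat \<in> Gj d k A \<and> (\<forall>G\<in>Gj d k A. score Hh G \<le> score Hh Ghat) \<and>
     (let C = accept_cands d k Hh et V A Ghat in
       if C \<noteq> {} then (\<exists>f\<in>C. V' = insert (fst f) V \<and> A' = insert f A)
       else V' = V \<and> A' = A)"

text \<open>Hh t = estimates after round t; rnd j = round of
  iteration j; Vs j, As j = V and A_j at the start of iteration j (Vs (J+1), As (J+1) final);
  Gh j = the chosen maximiser of iteration j.\<close>
definition is_run :: "nat \<Rightarrow> nat \<Rightarrow> real \<Rightarrow> real \<Rightarrow> (nat \<Rightarrow> family \<Rightarrow> real) \<Rightarrow> (nat \<Rightarrow> nat)
    \<Rightarrow> (nat \<Rightarrow> nat set) \<Rightarrow> (nat \<Rightarrow> family set) \<Rightarrow> (nat \<Rightarrow> family set) \<Rightarrow> nat \<Rightarrow> bool" where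
  "is_run d k eps eps1 Hh rnd Vs As Gh J \<longleftrightarrow>
     As 1 = {} \<and> Vs 1 = {} \<and> rnd 1 = 1 \<and>
     (1 \<le> J \<longleftrightarrow> epsr eps1 1 > eps / real d) \<and>
     (\<forall>j\<in>{1..J}. iter_step d k (Hh (rnd j)) (epsr eps1 (rnd j)) (Vs j) (As j) (Gh j)
                    (Vs (Suc j)) (As (Suc j))) \<and>
     (\<forall>j\<in>{1..<J}.
        (if As (Suc j) \<noteq> As j then rnd (Suc j) = rnd j
         else card (Vs (Suc j)) \<noteq> d \<and>
              epsr eps1 (Suc (rnd j)) > eps / real (d - card (Vs (Suc j))) \<and>
              rnd (Suc j) = Suc (rnd j))) \<and>
     (1 \<le> J \<longrightarrow> As (Suc J) = As J \<and>
        (card (Vs (Suc J)) = d \<or> \<not> epsr eps1 (Suc (rnd J)) > eps / real (d - card (Vs (Suc J)))))"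

text \<open>The event E: at every round t of the run, every family active w.r.t. the value of V at
  the start of round t is estimated within eps_t/2.\<close>
definition good_event :: "nat \<Rightarrow> nat \<Rightarrow> real \<Rightarrow> (family \<Rightarrow> real) \<Rightarrow> (nat \<Rightarrow> family \<Rightarrow> real)
    \<Rightarrow> (nat \<Rightarrow> nat) \<Rightarrow> (nat \<Rightarrow> nat set) \<Rightarrow> nat \<Rightarrow> bool" where
  "good_event d k eps1 H Hh rnd Vs J \<longleftrightarrow>
     (\<forall>j\<in>{1..J}. (j = 1 \<or> rnd (j - 1) \<noteq> rnd j) \<longrightarrow>
        (\<forall>f\<in>Fact d k (Vs j). \<bar>Hh (rnd j) f - H f\<bar> \<le> epsr eps1 (rnd j) / 2))"

definition Gstar_j :: "nat \<Rightarrow> nat \<Rightarrow> (family \<Rightarrow> real) \<Rightarrow> family set \<Rightarrow> family set set" where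
  "Gstar_j d k H A = {G \<in> Gj d k A. score H G = Sstar d k H}"

text \<open>S_j^neg(f), with max of the empty set = -infinity.\<close>
definition Sneg :: "nat \<Rightarrow> nat \<Rightarrow> (family \<Rightarrow> real) \<Rightarrow> family set \<Rightarrow> family \<Rightarrow> ereal" where
  "Sneg d k H A f = Sup (ereal ` score_EC H ` {E \<in> ECs d k. E \<inter> Gj d k A \<noteq> {} \<and>
                                              f \<notin> Ufam (E \<inter> Gj d k A)})"

end

theory Submission
  imports Defs
begin

lemma fin_families: "finite (families d k)"
proof -
  have "families d k \<subseteq> {..<d} \<times> Pow {..<d}" by (auto simp: families_def)
  thus ?thesis by (rule finite_subset) auto
qed

lemma fin_dags: "finite (dags d k)"
  using fin_families by (rule_tac finite_subset[of _ "Pow (families d k)"]) (auto simp: dags_def)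

lemma err:
  assumes G: "G \<in> dags d k" and AG: "A \<subseteq> G" and V: "V = fst ` A"
    and est: "\<forall>g\<in>Fact d k V. \<bar>Hh g - H g\<bar> \<le> et/2" and et: "0 \<le> et"
  shows "\<bar>score Hh G - score H G + (\<Sum>a\<in>A. Hh a - H a)\<bar> \<le> theta d V et / 2"
proof -
  have Gf: "G \<subseteq> families d k" and uq: "\<forall>i<d. \<exists>!Pa. (i, Pa) \<in> G" using G by (auto simp: dags_def)
  have finG: "finite G" using Gf fin_families finite_subset by blast
  have finA: "finite A" using AG finG finite_subset by blast
  have Vd: "V \<subseteq> {..<d}" using V AG Gf by (auto simp: families_def)
  have sub: "G - A \<subseteq> {g\<in>G. fst g \<notin> V}"
  proof
    fix g assume g: "g \<in> G - A"
    show "g \<in> {g\<in>G. fst g \<notin> V}"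
    proof (rule ccontr)
      assume "g \<notin> {g\<in>G. fst g \<notin> V}"
      then obtain a where a: "a \<in> A" "fst a = fst g" using g V by auto
      obtain i Pa Pa' where gi: "g = (i, Pa)" and ai: "a = (i, Pa')" using a by (cases g, cases a) auto
      have "i < d" using g gi Gf by (auto simp: families_def)
      hence "Pa = Pa'" using uq g gi a ai AG by blast
      thus False using g gi a ai by auto
    qed
  qed
  have injG: "inj_on fst G"
  proof (rule inj_onI)
    fix x y assume "x \<in> G" "y \<in> G" "fst x = fst y"
    moreover obtain i Pa Pa' where "x = (i, Pa)" "y = (i, Pa')" using \<open>fst x = fst y\<close> by (cases x, cases y) auto
    moreover have "i < d" using \<open>x \<in> G\<close> \<open>x = (i, Pa)\<close> Gf by (auto simp: families_def)
    ultimately show "x = y" using uq by blast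
  qed
  have "card (G - A) \<le> card {g\<in>G. fst g \<notin> V}" using sub finG by (intro card_mono) auto
  also have "\<dots> = card (fst ` {g\<in>G. fst g \<notin> V})"
    using injG by (intro card_image[symmetric]) (auto intro: inj_on_subset)
  also have "\<dots> \<le> card ({..<d} - V)"
    using Gf by (intro card_mono) (auto simp: families_def)
  also have "\<dots> = d - card V" using Vd finite_subset by (subst card_Diff_subset) auto
  finally have cardle: "card (G - A) \<le> d - card V" .
  have GA: "G - A \<subseteq> Fact d k V" using sub Gf by (auto simp: Fact_def)
  have "score Hh G - score H G + (\<Sum>a\<in>A. Hh a - H a) = - (\<Sum>g\<in>G. Hh g - H g) + (\<Sum>a\<in>A. Hh a - H a)"
    by (simp add: score_def sum_subtractf)
  also have "(\<Sum>g\<in>G. Hh g - H g) = (\<Sum>g\<in>G - A. Hh g - H g) + (\<Sum>a\<in>A. Hh a - H a)"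
    using finG AG by (metis sum.subset_diff)
  finally have eq: "score Hh G - score H G + (\<Sum>a\<in>A. Hh a - H a) = - (\<Sum>g\<in>G - A. Hh g - H g)" by simp
  have "\<bar>\<Sum>g\<in>G - A. Hh g - H g\<bar> \<le> (\<Sum>g\<in>G - A. \<bar>Hh g - H g\<bar>)" by (rule sum_abs)
  also have "\<dots> \<le> (\<Sum>g\<in>G - A. et/2)" using GA est by (intro sum_mono) auto
  also have "\<dots> = real (card (G - A)) * (et/2)" by simp
  also have "\<dots> \<le> real (d - card V) * (et/2)" using cardle et by (intro mult_right_mono) auto
  also have "\<dots> = theta d V et / 2" by (simp add: theta_def)
  finally show ?thesis using eq by simp
qed


lemma ec_sub: "E \<in> ECs d k \<Longrightarrow> E \<subseteq> dags d k"
  by (auto simp: ECs_def quotient_def meq_rel_def)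

lemma core:
  assumes st: "iter_step d k Hh et V A Ghat V' A'"
    and V: "V = fst ` A"
    and est: "\<forall>g\<in>Fact d k V. \<bar>Hh g - H g\<bar> \<le> et/2" and et: "0 \<le> et"
    and f: "f \<in> Ufam (Gstar_j d k H A) \<inter> Fact d k V"
    and sn: "Sneg d k H A f < ereal (Sstar d k H - 2 * theta d V et)"
  shows "\<exists>f'\<in>Fact d k V. A' = insert f' A"
proof -
  define GJ where "GJ = Gj d k A"
  define c where "c = (\<Sum>a\<in>A. Hh a - H a)"
  define th where "th = theta d V et"
  define Eh where "Eh = ec_of d k Ghat"
  have th0: "0 \<le> th" using et by (simp add: th_def theta_def)
  have Gh: "Ghat \<in> GJ" and ghmax: "\<forall>G\<in>GJ. score Hh G \<le> score Hh Ghat"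
    using st by (auto simp: iter_step_def GJ_def)
  obtain Gs where Gs: "Gs \<in> Gstar_j d k H A" "f \<in> Gs" using f by (auto simp: Ufam_def)
  have GsJ: "Gs \<in> GJ" and GsS: "score H Gs = Sstar d k H"
    using Gs by (auto simp: Gstar_j_def GJ_def)
  have errG: "\<bar>score Hh G - score H G + c\<bar> \<le> th / 2" if "G \<in> GJ" for G
    using err[of G d k A V Hh H et] that V est et by (auto simp: GJ_def Gj_def c_def th_def)
  have EhE: "Eh \<in> ECs d k" using Gh by (auto simp: Eh_def ec_of_def ECs_def GJ_def Gj_def intro!: quotientI)
  have GhEh: "Ghat \<in> Eh" using Gh by (auto simp: Eh_def ec_of_def meq_rel_def markov_equiv_def GJ_def Gj_def)
  have finEh: "finite (Eh \<inter> GJ)" using ec_sub[OF EhE] fin_dags finite_subset by blast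
  have key: "f \<in> Ufam (E \<inter> GJ)" if E: "E \<in> ECs d k" "E \<inter> GJ \<noteq> {}"
     and dif: "Shat_set Hh (Eh \<inter> GJ) - Shat_set Hh (E \<inter> GJ) \<le> th" for E
  proof (rule ccontr)
    assume nf: "f \<notin> Ufam (E \<inter> GJ)"
    have finE: "finite E" using ec_sub[OF E(1)] fin_dags finite_subset by blast
    have "Shat_set Hh (E \<inter> GJ) \<in> score Hh ` (E \<inter> GJ)"
      unfolding Shat_set_def using finE E(2) by (intro Max_in) auto
    then obtain G' where G': "G' \<in> E" "G' \<in> GJ" "Shat_set Hh (E \<inter> GJ) = score Hh G'" by auto
    have "score Hh Ghat \<le> Shat_set Hh (Eh \<inter> GJ)"
      unfolding Shat_set_def using finEh GhEh Gh by (intro Max_ge) auto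
    moreover have "score Hh Gs \<le> score Hh Ghat" using ghmax GsJ by auto
    moreover have "score H G' \<le> score_EC H E"
      unfolding score_EC_def using finE G' by (intro Max_ge) auto
    moreover have "ereal (score_EC H E) \<le> Sneg d k H A f"
      unfolding Sneg_def using E nf by (intro Sup_upper) (auto simp: GJ_def)
    moreover note errG[OF GsJ] errG[OF G'(2)]
    ultimately have "Sstar d k H - 2 * th \<le> score_EC H E" and le: "ereal (score_EC H E) \<le> Sneg d k H A f"
      using dif G'(3) GsS by linarith+
    hence "ereal (Sstar d k H - 2 * th) \<le> Sneg d k H A f"
      using order_trans ereal_less_eq(3) by blast
    thus False using sn by (simp add: th_def)
  qed
  have "f \<in> accept_cands d k Hh et V A Ghat"
    unfolding accept_cands_def Let_def
  proof (intro CollectI conjI ballI IntI)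
    show "f \<in> Ufam (ec_of d k Ghat \<inter> Gj d k A)"
      using key[OF EhE] Gh GhEh th0 by (auto simp: Eh_def GJ_def)
    show "f \<in> Fact d k V" using f by auto
    fix E assume "E \<in> {E \<in> ECs d k. E \<inter> Gj d k A \<noteq> {} \<and>
          Shat_set Hh (ec_of d k Ghat \<inter> Gj d k A) - Shat_set Hh (E \<inter> Gj d k A) \<le> theta d V et}"
    thus "f \<in> Ufam (E \<inter> Gj d k A)" using key by (auto simp: Eh_def GJ_def th_def)
  qed
  hence "accept_cands d k Hh et V A Ghat \<noteq> {}" by auto
  then obtain f' where f': "f' \<in> accept_cands d k Hh et V A Ghat" "A' = insert f' A"
    using st unfolding iter_step_def Let_def by (auto split: if_splits)
  have "f' \<in> Fact d k V" using f'(1) by (simp add: accept_cands_def Let_def)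
  thus ?thesis using f' by blast
qed


theorem lemma3:
  fixes P :: "(nat \<Rightarrow> 'v) pmf" and d k J j :: nat and eps eps1 :: real
    and Hh :: "nat \<Rightarrow> family \<Rightarrow> real" and rnd :: "nat \<Rightarrow> nat"
    and Vs :: "nat \<Rightarrow> nat set" and As Gh :: "nat \<Rightarrow> family set" and f :: family
  assumes "0 < d" and "0 < k" and "finite (set_pmf P)" and "0 < eps" and "0 < eps1"
    and "is_run d k eps eps1 Hh rnd Vs As Gh J"
    and "good_event d k eps1 (Hfam P) Hh rnd Vs J"
    and "j \<in> {1..J}"
    and "f \<in> Ufam (Gstar_j d k (Hfam P) (As j)) \<inter> Fact d k (Vs j)"
    and "Sneg d k (Hfam P) (As j) f
           < ereal (Sstar d k (Hfam P) - 2 * theta d (Vs j) (epsr eps1 (rnd j)))"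
  shows "\<exists>f'\<in>Fact d k (Vs j). As (Suc j) = insert f' (As j)"
proof -
  note run = assms(6)[unfolded is_run_def]
  have base: "As 1 = {}" "Vs 1 = {}" using run by auto
  have steps: "\<And>i. i \<in> {1..J} \<Longrightarrow> iter_step d k (Hh (rnd i)) (epsr eps1 (rnd i)) (Vs i) (As i) (Gh i)
                    (Vs (Suc i)) (As (Suc i))" using run by blast
  have rstep: "\<And>i. i \<in> {1..<J} \<Longrightarrow> rnd (Suc i) = rnd i \<or> rnd (Suc i) = Suc (rnd i)"
    using run by (auto split: if_splits)
  have stepV: "Vs i \<subseteq> Vs (Suc i) \<and> (Vs i = fst ` As i \<longrightarrow> Vs (Suc i) = fst ` As (Suc i))"
    if "i \<in> {1..J}" for i
  proof -
    have "(Vs (Suc i) = Vs i \<and> As (Suc i) = As i) \<or>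
      (\<exists>f. Vs (Suc i) = insert (fst f) (Vs i) \<and> As (Suc i) = insert f (As i))"
      using steps[OF that] unfolding iter_step_def Let_def by (metis (no_types, lifting))
    thus ?thesis by (metis image_insert subset_insertI order_refl)
  qed
  have inv: "1 \<le> i \<Longrightarrow> i \<le> J \<Longrightarrow> Vs i = fst ` As i" for i
  proof (induction i)
    case 0 thus ?case by simp
  next
    case (Suc i)
    show ?case
    proof (cases "i = 0")
      case True thus ?thesis using base by simp
    next
      case False thus ?thesis using Suc stepV[of i] by auto
    qed
  qed
  have start: "1 \<le> i \<Longrightarrow> i \<le> J \<Longrightarrow> \<exists>j0. 1 \<le> j0 \<and> j0 \<le> i \<and> rnd j0 = rnd i \<and>
      (j0 = 1 \<or> rnd (j0 - 1) \<noteq> rnd j0) \<and> Vs j0 \<subseteq> Vs i" for i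
  proof (induction i)
    case 0 thus ?case by simp
  next
    case (Suc i)
    show ?case
    proof (cases "i = 0")
      case True thus ?thesis by auto
    next
      case False
      show ?thesis
      proof (cases "rnd (Suc i) = rnd i")
        case True
        then obtain j0 where "1 \<le> j0 \<and> j0 \<le> i \<and> rnd j0 = rnd i \<and>
          (j0 = 1 \<or> rnd (j0 - 1) \<noteq> rnd j0) \<and> Vs j0 \<subseteq> Vs i" using Suc False by auto
        moreover have "Vs i \<subseteq> Vs (Suc i)" using stepV[of i] Suc False by auto
        ultimately show ?thesis using True by (intro exI[of _ j0]) auto
      next
        case False
        thus ?thesis by (intro exI[of _ "Suc i"]) auto
      qed
    qed
  qed
  have j: "1 \<le> j" "j \<le> J" using assms(8) by auto
  obtain j0 where j0: "1 \<le> j0" "j0 \<le> j" "rnd j0 = rnd j" "j0 = 1 \<or> rnd (j0 - 1) \<noteq> rnd j0"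
     "Vs j0 \<subseteq> Vs j" using start[OF j] by blast
  have ev: "\<forall>g\<in>Fact d k (Vs j0). \<bar>Hh (rnd j0) g - Hfam P g\<bar> \<le> epsr eps1 (rnd j0) / 2"
  proof -
    have "j0 \<in> {1..J}" using j0 j by auto
    thus ?thesis using assms(7) j0(4) unfolding good_event_def by blast
  qed
  have est: "\<forall>g\<in>Fact d k (Vs j). \<bar>Hh (rnd j) g - Hfam P g\<bar> \<le> epsr eps1 (rnd j) / 2"
    using ev j0 by (auto simp: Fact_def)
  have et: "0 \<le> epsr eps1 (rnd j)" using assms(5) by (simp add: epsr_def)
  show ?thesis
    by (rule core[OF steps[OF assms(8)] inv[OF j] est et assms(9) assms(10)])
qed

end
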